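(* Let $(\Omega,\mathcal{F},\mathbb{P})$ be a probability space, $\mathcal{G}\subseteq\mathcal{F}$ a sub-$\sigma$-algebra, and $m\in\mathbb{N}$. Let $X:\Omega\to\mathcal{M}_{\mathcal{I}}^{(m)}$ be $\mathcal{G}$-measurable and almost surely bounded, with $X(\omega)=\langle [a_k(\omega),a_k(\omega)]\rangle_{0\le k\le m}$ (degenerate intervals) for all $\omega\in\Omega$, and let $Y:\Omega\to\mathcal{M}_{\mathcal{I}}^{(m)}$ be a random variable. Then $\mathbb{E}[X\otimes Y\mid\mathcal{G}]=X\otimes\mathbb{E}[Y\mid\mathcal{G}]$ almost surely.
   Context: The interval semiring $\mathcal{I}$ has carrier $\{[a,b]:a\le b\}$, $[a,b]+_{\mathcal{I}}[c,d]=[a+c,b+d]$, $[a,b]\cdot_{\mathcal{I}}[c,d]=[\min S,\max S]$ with $S=\{ac,ad,bc,bd\}$. The moment semiring $\mathcal{M}_{\mathcal{I}}^{(m)}$ consists of vectors $\langle u_k\rangle_{0\le k\le m}$ of intervals with pointwise addition $\oplus$ and product $\langle u_k\rangle\otimes\langle v_k\rangle=\big\langle \sum_{i=0}^k\binom{k}{i}\times(u_i\cdot_{\mathcal{I}} v_{k-i})\big\rangle_{0\le k\le m}$ (sums in $+_{\mathcal{I}}$, $n\times u$ meaning the $n$-fold $+_{\mathcal{I}}$-sum of $u$). (Conditional) expectations of $\mathcal{M}_{\mathcal{I}}^{(m)}$-valued random variables are taken componentwise on the interval endpoints (for random variables whose endpoints are integrable). *)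

theory Defs
  imports "HOL-Probability.Probability"
begin

text \<open>Intervals [a,b] are represented as pairs (a,b) with a \<le> b.\<close>
type_synonym interval = "real \<times> real"

definition iadd :: "interval \<Rightarrow> interval \<Rightarrow> interval" where
  "iadd u v = (fst u + fst v, snd u + snd v)"

definition imul :: "interval \<Rightarrow> interval \<Rightarrow> interval" where
  "imul u v = (let S = {fst u * fst v, fst u * snd v, snd u * fst v, snd u * snd v}
               in (Min S, Max S))"

fun iscale :: "nat \<Rightarrow> interval \<Rightarrow> interval" where
  "iscale 0 u = (0, 0)"
| "iscale (Suc n) u = iadd u (iscale n u)"

fun isum :: "(nat \<Rightarrow> interval) \<Rightarrow> nat \<Rightarrow> interval" where
  "isum f 0 = f 0"
| "isum f (Suc k) = iadd (isum f k) (f (Suc k))"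

text \<open>Moment-semiring elements: vectors nat \<Rightarrow> interval, only components 0..m matter.\<close>
definition mprod :: "(nat \<Rightarrow> interval) \<Rightarrow> (nat \<Rightarrow> interval) \<Rightarrow> nat \<Rightarrow> interval" where
  "mprod u v k = isum (\<lambda>i. iscale (k choose i) (imul (u i) (v (k - i)))) k"

definition mcond_exp :: "'a measure \<Rightarrow> 'a measure \<Rightarrow> ('a \<Rightarrow> nat \<Rightarrow> interval) \<Rightarrow> 'a \<Rightarrow> nat \<Rightarrow> interval" where
  "mcond_exp M G Z \<omega> k =
     (real_cond_exp M G (\<lambda>x. fst (Z x k)) \<omega>, real_cond_exp M G (\<lambda>x. snd (Z x k)) \<omega>)"

end

theory Submission
  imports Defs
begin

lemma fst_iscale: "fst (iscale n u) = real n * fst u" "snd (iscale n u) = real n * snd u"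
  by (induction n) (auto simp: iadd_def algebra_simps)

lemma fst_isum: "fst (isum f k) = (\<Sum>i\<le>k. fst (f i))" "snd (isum f k) = (\<Sum>i\<le>k. snd (f i))"
  by (induction k) (auto simp: iadd_def)

lemma imul_deg:
  assumes "c \<le> d"
  shows "imul (x,x) (c,d) = (max x 0 * c - max (-x) 0 * d, max x 0 * d - max (-x) 0 * c)"
proof (cases "x \<ge> 0")
  case True
  then have "x * c \<le> x * d" using assms mult_left_mono by blast
  then show ?thesis using True by (auto simp: imul_def Let_def min_def max_def)
next
  case False
  then have "x * d \<le> x * c" using assms mult_left_mono_neg by force
  then show ?thesis using False by (auto simp: imul_def Let_def min_def max_def)
qed

lemma mprod_deg:
  assumes "\<And>i. i \<le> k \<Longrightarrow> u i = (x i, x i)" "\<And>i. i \<le> k \<Longrightarrow> fst (v i) \<le> snd (v i)"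
  shows "fst (mprod u v k) = (\<Sum>i\<le>k. real (k choose i) * (max (x i) 0 * fst (v (k-i)) - max (-x i) 0 * snd (v (k-i))))"
    "snd (mprod u v k) = (\<Sum>i\<le>k. real (k choose i) * (max (x i) 0 * snd (v (k-i)) - max (-x i) 0 * fst (v (k-i))))"
proof -
  have e: "imul (u i) (v (k-i)) = (max (x i) 0 * fst (v (k-i)) - max (-x i) 0 * snd (v (k-i)),
      max (x i) 0 * snd (v (k-i)) - max (-x i) 0 * fst (v (k-i)))" if "i \<le> k" for i
    using imul_deg[of "fst (v (k-i))" "snd (v (k-i))" "x i"] assms[of i] assms(2)[of "k-i"] that by simp
  show "fst (mprod u v k) = (\<Sum>i\<le>k. real (k choose i) * (max (x i) 0 * fst (v (k-i)) - max (-x i) 0 * snd (v (k-i))))"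
    unfolding mprod_def fst_isum fst_iscale by (rule sum.cong) (auto simp: e)
  show "snd (mprod u v k) = (\<Sum>i\<le>k. real (k choose i) * (max (x i) 0 * snd (v (k-i)) - max (-x i) 0 * fst (v (k-i))))"
    unfolding mprod_def fst_isum fst_iscale by (rule sum.cong) (auto simp: e)
qed

lemma (in sigma_finite_subalgebra) cond_lin:
  fixes f g p q :: "'a \<Rightarrow> real"
  assumes [measurable]: "p \<in> borel_measurable F" "q \<in> borel_measurable F"
    and bd: "AE x in M. \<bar>p x\<bar> \<le> C \<and> \<bar>q x\<bar> \<le> C"
    and fi: "integrable M f" and gi: "integrable M g"
  shows "AE x in M. real_cond_exp M F (\<lambda>x. c * (p x * f x - q x * g x)) x
      = c * (p x * real_cond_exp M F f x - q x * real_cond_exp M F g x)"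
proof -
  have pm[measurable]: "p \<in> borel_measurable M" "q \<in> borel_measurable M"
    using measurable_from_subalg[OF subalg assms(1)] measurable_from_subalg[OF subalg assms(2)] by auto
  have fm[measurable]: "f \<in> borel_measurable M" "g \<in> borel_measurable M" using fi gi by auto
  have i1: "integrable M (\<lambda>x. p x * f x)"
    proof (rule Bochner_Integration.integrable_bound[where f="\<lambda>x. C * \<bar>f x\<bar>"])
    show "integrable M (\<lambda>x. C * \<bar>f x\<bar>)" using fi by auto
    show "AE x in M. norm (p x * f x) \<le> norm (C * \<bar>f x\<bar>)"
      using bd proof eventually_elim
      case (elim x)
      then have "\<bar>p x\<bar> * \<bar>f x\<bar> \<le> C * \<bar>f x\<bar>" by (intro mult_right_mono) auto
      then show ?case by (simp add: abs_mult) (smt (verit) abs_ge_self abs_not_less_zero mult_right_mono)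
    qed
  qed auto
  have i2: "integrable M (\<lambda>x. q x * g x)"
    proof (rule Bochner_Integration.integrable_bound[where f="\<lambda>x. C * \<bar>g x\<bar>"])
    show "integrable M (\<lambda>x. C * \<bar>g x\<bar>)" using gi by auto
    show "AE x in M. norm (q x * g x) \<le> norm (C * \<bar>g x\<bar>)"
      using bd proof eventually_elim
      case (elim x)
      then have "\<bar>q x\<bar> * \<bar>g x\<bar> \<le> C * \<bar>g x\<bar>" by (intro mult_right_mono) auto
      then show ?case by (simp add: abs_mult) (smt (verit) abs_ge_self abs_not_less_zero mult_right_mono)
    qed
  qed auto
  have a1: "AE x in M. real_cond_exp M F (\<lambda>x. c * (p x * f x - q x * g x)) x
      = c * real_cond_exp M F (\<lambda>x. p x * f x - q x * g x) x"
    by (rule real_cond_exp_cmult) (use i1 i2 in auto)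
  have a2: "AE x in M. real_cond_exp M F (\<lambda>x. p x * f x - q x * g x) x
      = real_cond_exp M F (\<lambda>x. p x * f x) x - real_cond_exp M F (\<lambda>x. q x * g x) x"
    by (rule real_cond_exp_diff) (use i1 i2 in auto)
  have a3: "AE x in M. real_cond_exp M F (\<lambda>x. p x * f x) x = p x * real_cond_exp M F f x"
    by (rule real_cond_exp_mult) (use i1 in auto)
  have a4: "AE x in M. real_cond_exp M F (\<lambda>x. q x * g x) x = q x * real_cond_exp M F g x"
    by (rule real_cond_exp_mult) (use i2 in auto)
  show ?thesis using a1 a2 a3 a4 by eventually_elim simp
qed

lemma bdd_mult_int:
  fixes f p :: "'a \<Rightarrow> real"
  assumes [measurable]: "p \<in> borel_measurable M" and bd: "AE x in M. \<bar>p x\<bar> \<le> C" and fi: "integrable M f"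
  shows "integrable M (\<lambda>x. p x * f x)"
proof (rule Bochner_Integration.integrable_bound[where f="\<lambda>x. C * \<bar>f x\<bar>"])
  show "integrable M (\<lambda>x. C * \<bar>f x\<bar>)" using fi by auto
  show "AE x in M. norm (p x * f x) \<le> norm (C * \<bar>f x\<bar>)"
    using bd proof eventually_elim
    case (elim x)
    then have "\<bar>p x\<bar> * \<bar>f x\<bar> \<le> C * \<bar>f x\<bar>" by (intro mult_right_mono) auto
    then show ?case by (simp add: abs_mult) (smt (verit) abs_ge_self abs_not_less_zero mult_right_mono)
  qed
qed (use fi in auto)

theorem lemmaE5:
  fixes M G :: "'a measure" and m :: nat
    and X Y :: "'a \<Rightarrow> nat \<Rightarrow> interval" and a :: "nat \<Rightarrow> 'a \<Rightarrow> real"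
  assumes "prob_space M"
    and "sigma_finite_subalgebra M G"
    and X_deg: "\<And>\<omega> k. \<omega> \<in> space M \<Longrightarrow> k \<le> m \<Longrightarrow> X \<omega> k = (a k \<omega>, a k \<omega>)"
    and X_meas: "\<And>k. k \<le> m \<Longrightarrow> a k \<in> borel_measurable G"
    and X_bdd: "\<exists>C. AE \<omega> in M. \<forall>k\<le>m. \<bar>a k \<omega>\<bar> \<le> C"
    and Y_int: "\<And>\<omega> k. \<omega> \<in> space M \<Longrightarrow> k \<le> m \<Longrightarrow> fst (Y \<omega> k) \<le> snd (Y \<omega> k)"
    and Y_lo: "\<And>k. k \<le> m \<Longrightarrow> integrable M (\<lambda>\<omega>. fst (Y \<omega> k))"
    and Y_hi: "\<And>k. k \<le> m \<Longrightarrow> integrable M (\<lambda>\<omega>. snd (Y \<omega> k))"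
  shows "AE \<omega> in M. \<forall>k\<le>m.
           mcond_exp M G (\<lambda>x. mprod (X x) (Y x)) \<omega> k
           = mprod (X \<omega>) (mcond_exp M G Y \<omega>) k"
proof -
  interpret sigma_finite_subalgebra M G by (rule assms(2))
  obtain C where C: "AE \<omega> in M. \<forall>k\<le>m. \<bar>a k \<omega>\<bar> \<le> C" using X_bdd by blast
  define p where "p i x = max (a i x) 0" for i x
  define q where "q i x = max (- a i x) 0" for i x
  have pG: "p i \<in> borel_measurable G" "q i \<in> borel_measurable G" if "i \<le> m" for i
    using X_meas[OF that] unfolding p_def q_def by auto
  have pM: "p i \<in> borel_measurable M" "q i \<in> borel_measurable M" if "i \<le> m" for i
    using measurable_from_subalg[OF subalg pG(1)[OF that]] measurable_from_subalg[OF subalg pG(2)[OF that]] by auto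
  have bd: "AE x in M. \<bar>p i x\<bar> \<le> C \<and> \<bar>q i x\<bar> \<le> C" if "i \<le> m" for i
    using C by eventually_elim (use that in \<open>auto simp: p_def q_def\<close>)
  have bdp: "AE x in M. \<bar>p i x\<bar> \<le> C" "AE x in M. \<bar>q i x\<bar> \<le> C" if "i \<le> m" for i
    using bd[OF that] by (auto elim: AE_mp)
  define Ef where "Ef j = real_cond_exp M G (\<lambda>x. fst (Y x j))" for j
  define Eg where "Eg j = real_cond_exp M G (\<lambda>x. snd (Y x j))" for j
  have gen: "AE \<omega> in M. real_cond_exp M G Z \<omega> =
      (\<Sum>i\<le>k. real (k choose i) * (p i \<omega> * real_cond_exp M G (\<lambda>x. F (Y x (k-i))) \<omega>
                                  - q i \<omega> * real_cond_exp M G (\<lambda>x. H (Y x (k-i))) \<omega>))"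
    if k: "k \<le> m" and FH: "\<And>x. x \<in> space M \<Longrightarrow> Z x =
      (\<Sum>i\<le>k. real (k choose i) * (p i x * F (Y x (k-i)) - q i x * H (Y x (k-i))))"
    and Fi: "\<And>j. j \<le> m \<Longrightarrow> integrable M (\<lambda>x. F (Y x j))"
    and Hi: "\<And>j. j \<le> m \<Longrightarrow> integrable M (\<lambda>x. H (Y x j))"
    for k and F H :: "interval \<Rightarrow> real" and Z :: "'a \<Rightarrow> real"
  proof -
    define h where "h i x = (if i \<le> k then real (k choose i) * (p i x * F (Y x (k-i)) - q i x * H (Y x (k-i))) else 0)" for i x
    have hi: "integrable M (h i)" for i
    proof (cases "i \<le> k")
      case True
      then have "i \<le> m" "k - i \<le> m" using k by auto
      then show ?thesis unfolding h_def using True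
        by (auto intro!: Bochner_Integration.integrable_diff bdd_mult_int pM bdp Fi Hi)
    next
      case False
      then have "h i = (\<lambda>x. 0)" by (auto simp: h_def)
      then show ?thesis by simp
    qed
    have hm: "(\<lambda>x. \<Sum>i\<le>k. h i x) \<in> borel_measurable M" using hi by auto
    have eq: "Z x = (\<Sum>i\<le>k. h i x)" if "x \<in> space M" for x
      unfolding FH[OF that] h_def by simp
    have mm: "Z \<in> borel_measurable M"
      using measurable_cong[of M "Z" "\<lambda>x. \<Sum>i\<le>k. h i x", OF eq] hm by auto
    have A1: "AE x in M. real_cond_exp M G Z x = real_cond_exp M G (\<lambda>x. \<Sum>i\<le>k. h i x) x"
      by (rule real_cond_exp_cong) (use eq mm hm in auto)
    have A2: "AE x in M. real_cond_exp M G (\<lambda>x. \<Sum>i\<le>k. h i x) x = (\<Sum>i\<le>k. real_cond_exp M G (h i) x)"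
      by (rule real_cond_exp_sum) (use hi in auto)
    have A3: "AE x in M. \<forall>i\<in>{..k}. real_cond_exp M G (h i) x = real (k choose i) * (p i x * real_cond_exp M G (\<lambda>x. F (Y x (k-i))) x
                                  - q i x * real_cond_exp M G (\<lambda>x. H (Y x (k-i))) x)"
    proof (rule AE_finite_allI)
      fix i assume "i \<in> {..k}"
      then have i: "i \<le> k" "i \<le> m" "k - i \<le> m" using k by auto
      have "h i = (\<lambda>x. real (k choose i) * (p i x * F (Y x (k-i)) - q i x * H (Y x (k-i))))"
        using i by (auto simp: h_def)
      then show "AE x in M. real_cond_exp M G (h i) x = real (k choose i) * (p i x * real_cond_exp M G (\<lambda>x. F (Y x (k-i))) x
                                  - q i x * real_cond_exp M G (\<lambda>x. H (Y x (k-i))) x)"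
        using cond_lin[OF pG(1)[OF i(2)] pG(2)[OF i(2)] bd[OF i(2)] Fi[OF i(3)] Hi[OF i(3)]] by simp
    qed simp
    show ?thesis using A1 A2 A3 by eventually_elim simp
  qed
  have FST: "AE \<omega> in M. real_cond_exp M G (\<lambda>x. fst (mprod (X x) (Y x) k)) \<omega> =
      (\<Sum>i\<le>k. real (k choose i) * (p i \<omega> * Ef (k-i) \<omega> - q i \<omega> * Eg (k-i) \<omega>))" if k: "k \<le> m" for k
    unfolding Ef_def Eg_def
  proof (rule gen[OF k, where Z="\<lambda>x. fst (mprod (X x) (Y x) k)"])
    fix x assume x: "x \<in> space M"
    show "fst (mprod (X x) (Y x) k) = (\<Sum>i\<le>k. real (k choose i) * (p i x * fst (Y x (k-i)) - q i x * snd (Y x (k-i))))"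
      unfolding p_def q_def by (rule mprod_deg(1)) (use x k X_deg Y_int in auto)
  qed (use Y_lo Y_hi in auto)
  have SND: "AE \<omega> in M. real_cond_exp M G (\<lambda>x. snd (mprod (X x) (Y x) k)) \<omega> =
      (\<Sum>i\<le>k. real (k choose i) * (p i \<omega> * Eg (k-i) \<omega> - q i \<omega> * Ef (k-i) \<omega>))" if k: "k \<le> m" for k
    unfolding Ef_def Eg_def
  proof (rule gen[OF k, where Z="\<lambda>x. snd (mprod (X x) (Y x) k)"])
    fix x assume x: "x \<in> space M"
    show "snd (mprod (X x) (Y x) k) = (\<Sum>i\<le>k. real (k choose i) * (p i x * snd (Y x (k-i)) - q i x * fst (Y x (k-i))))"
      unfolding p_def q_def by (rule mprod_deg(2)) (use x k X_deg Y_int in auto)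
  qed (use Y_lo Y_hi in auto)
  have ORD: "AE \<omega> in M. Ef k \<omega> \<le> Eg k \<omega>" if k: "k \<le> m" for k
    unfolding Ef_def Eg_def by (rule real_cond_exp_mono) (use Y_int Y_lo Y_hi k in auto)
  have "AE \<omega> in M. \<forall>k. k \<le> m \<longrightarrow>
     (real_cond_exp M G (\<lambda>x. fst (mprod (X x) (Y x) k)) \<omega> =
      (\<Sum>i\<le>k. real (k choose i) * (p i \<omega> * Ef (k-i) \<omega> - q i \<omega> * Eg (k-i) \<omega>))) \<and>
     (real_cond_exp M G (\<lambda>x. snd (mprod (X x) (Y x) k)) \<omega> =
      (\<Sum>i\<le>k. real (k choose i) * (p i \<omega> * Eg (k-i) \<omega> - q i \<omega> * Ef (k-i) \<omega>))) \<and>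
     Ef k \<omega> \<le> Eg k \<omega>"
    unfolding AE_all_countable using FST SND ORD by (auto intro!: AE_impI)
  then show ?thesis
  proof (rule AE_mp, intro AE_I2 impI allI)
    fix \<omega> k assume \<omega>: "\<omega> \<in> space M" and H: "\<forall>k. k \<le> m \<longrightarrow>
     (real_cond_exp M G (\<lambda>x. fst (mprod (X x) (Y x) k)) \<omega> =
      (\<Sum>i\<le>k. real (k choose i) * (p i \<omega> * Ef (k-i) \<omega> - q i \<omega> * Eg (k-i) \<omega>))) \<and>
     (real_cond_exp M G (\<lambda>x. snd (mprod (X x) (Y x) k)) \<omega> =
      (\<Sum>i\<le>k. real (k choose i) * (p i \<omega> * Eg (k-i) \<omega> - q i \<omega> * Ef (k-i) \<omega>))) \<and>
     Ef k \<omega> \<le> Eg k \<omega>" and k: "k \<le> m"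
    have d1: "\<And>i. i \<le> k \<Longrightarrow> X \<omega> i = (a i \<omega>, a i \<omega>)" using X_deg \<omega> k by auto
    have d2: "\<And>i. i \<le> k \<Longrightarrow> fst (mcond_exp M G Y \<omega> i) \<le> snd (mcond_exp M G Y \<omega> i)"
      using H k by (auto simp: mcond_exp_def Ef_def Eg_def)
    show "mcond_exp M G (\<lambda>x. mprod (X x) (Y x)) \<omega> k = mprod (X \<omega>) (mcond_exp M G Y \<omega>) k"
    proof (rule prod_eqI)
      show "fst (mcond_exp M G (\<lambda>x. mprod (X x) (Y x)) \<omega> k) = fst (mprod (X \<omega>) (mcond_exp M G Y \<omega>) k)"
        using H[rule_format, OF k] mprod_deg(1)[of k "X \<omega>" "\<lambda>i. a i \<omega>" "mcond_exp M G Y \<omega>", OF d1 d2] by (simp add: mcond_exp_def Ef_def Eg_def p_def q_def)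
      show "snd (mcond_exp M G (\<lambda>x. mprod (X x) (Y x)) \<omega> k) = snd (mprod (X \<omega>) (mcond_exp M G Y \<omega>) k)"
        using H[rule_format, OF k] mprod_deg(2)[of k "X \<omega>" "\<lambda>i. a i \<omega>" "mcond_exp M G Y \<omega>", OF d1 d2] by (simp add: mcond_exp_def Ef_def Eg_def p_def q_def)
    qed
  qed
qed
end
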